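(* Let $r>0$ and $A=\mathbb{Z}^r$ with its standard generating set (the standard basis vectors). Then for every $n\in\mathbb{N}$, the number of $\operatorname{Aut}(A)$-orbits of $A$ containing an element of word length at most $n$ is exactly $n+1$.
   Context: Word length of $g$ with respect to a generating set $\Sigma$ is the least $n$ such that $g$ is a product of $n$ elements of $\Sigma\cup\Sigma^{-1}$. *)

theory Defs
  imports "HOL-Analysis.Analysis"
begin

text \<open>A = Z^r is modelled as int ^ 'n for a finite (nonempty) index type 'n, with r = CARD('n) > 0.\<close>

definition std_gens :: "(int ^ 'n) set" where
  "std_gens = {axis i 1 | i. True}"

definition word_length :: "('a::ab_group_add) set \<Rightarrow> 'a \<Rightarrow> nat" where
  "word_length S g = (LEAST n. \<exists>xs. length xs = n \<and> set xs \<subseteq> S \<union> uminus ` S \<and> sum_list xs = g)"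

definition Aut :: "('a::ab_group_add \<Rightarrow> 'a) set" where
  "Aut = {f. bij f \<and> (\<forall>x y. f (x + y) = f x + f y)}"

definition aut_orbit :: "'a::ab_group_add \<Rightarrow> 'a set" where
  "aut_orbit v = {f v | f. f \<in> Aut}"

end

theory Submission
  imports Defs
begin

lemma additive_zero:
  fixes f :: "'a::ab_group_add \<Rightarrow> 'b::ab_group_add"
  assumes "\<forall>x y. f (x + y) = f x + f y" shows "f 0 = 0"
proof -
  have "f (0 + 0) = f 0 + f 0" using assms by blast
  then show ?thesis by simp
qed

lemma additive_neg:
  fixes f :: "'a::ab_group_add \<Rightarrow> 'b::ab_group_add"
  assumes "\<forall>x y. f (x + y) = f x + f y" shows "f (- x) = - f x"
proof -
  have "f (x + - x) = f x + f (- x)" using assms by blast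
  then show ?thesis using additive_zero[OF assms] by (simp add: eq_neg_iff_add_eq_0 add.commute)
qed

lemma additive_smult_nat:
  fixes f :: "int ^ 'n \<Rightarrow> int ^ 'm"
  assumes "\<forall>x y. f (x + y) = f x + f y" shows "f (int k *s x) = int k *s f x"
proof (induction k)
  case 0
  then show ?case using additive_zero[OF assms] by simp
next
  case (Suc k)
  have "int (Suc k) *s x = x + int k *s x" by (simp add: vec_eq_iff algebra_simps)
  moreover have "int (Suc k) *s f x = f x + int k *s f x" by (simp add: vec_eq_iff algebra_simps)
  ultimately show ?case using Suc assms by simp
qed

lemma additive_smult:
  fixes f :: "int ^ 'n \<Rightarrow> int ^ 'm"
  assumes "\<forall>x y. f (x + y) = f x + f y" shows "f (k *s x) = k *s f x"
proof (cases "k \<ge> 0")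
  case True
  then obtain m where "k = int m" using nonneg_eq_int by blast
  then show ?thesis using additive_smult_nat[OF assms] by simp
next
  case False
  define m where "m = nat (- k)"
  have m: "k = - int m" using False by (simp add: m_def)
  have "k *s x = - (int m *s x)" using m by (simp add: vec_eq_iff)
  moreover have "k *s f x = - (int m *s f x)" using m by (simp add: vec_eq_iff)
  ultimately show ?thesis using additive_smult_nat[OF assms] additive_neg[OF assms] by simp
qed

lemma Aut_id: "id \<in> Aut" by (simp add: Aut_def)

lemma Aut_comp: "f \<in> Aut \<Longrightarrow> g \<in> Aut \<Longrightarrow> f \<circ> g \<in> Aut"
  by (auto simp: Aut_def bij_comp)

lemma Aut_inv: assumes "f \<in> Aut" shows "inv f \<in> Aut"
proof -
  have b: "bij f" and a: "\<forall>x y. f (x + y) = f x + f y" using assms by (auto simp: Aut_def)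
  have "inv f (x + y) = inv f x + inv f y" for x y
  proof -
    have "f (inv f x + inv f y) = x + y" using a b by (simp add: bij_is_surj surj_f_inv_f)
    then show ?thesis by (metis b bij_is_inj inv_f_f)
  qed
  then show ?thesis using b by (simp add: Aut_def bij_imp_bij_inv)
qed

lemma aut_orbit_eq: assumes "g \<in> Aut" shows "aut_orbit (g v) = aut_orbit v"
proof
  show "aut_orbit (g v) \<subseteq> aut_orbit v"
  proof
    fix w assume "w \<in> aut_orbit (g v)"
    then obtain f where f: "f \<in> Aut" "w = f (g v)" by (auto simp: aut_orbit_def)
    then have "w = (f \<circ> g) v" by simp
    then show "w \<in> aut_orbit v" using f Aut_comp[OF f(1) assms] unfolding aut_orbit_def by blast
  qed
next
  have gi: "inv g (g v) = v" using assms by (simp add: Aut_def bij_is_inj)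
  show "aut_orbit v \<subseteq> aut_orbit (g v)"
  proof
    fix w assume "w \<in> aut_orbit v"
    then obtain f where f: "f \<in> Aut" "w = f v" by (auto simp: aut_orbit_def)
    then have "w = (f \<circ> inv g) (g v)" using gi by simp
    then show "w \<in> aut_orbit (g v)" using f Aut_comp[OF f(1) Aut_inv[OF assms]] unfolding aut_orbit_def by blast
  qed
qed

definition cont :: "int ^ 'n \<Rightarrow> int" where
  "cont v = Gcd (range (\<lambda>i. v $ i))"

lemma cont_nonneg: "cont v \<ge> 0"
  unfolding cont_def by (metis normalize_Gcd abs_of_nonneg normalize_int_def abs_ge_zero)

lemma cont_dvd: "cont v dvd v $ i"
  unfolding cont_def by (rule Gcd_dvd) simp

lemma dvd_cont: "(\<And>i. d dvd v $ i) \<Longrightarrow> d dvd cont v"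
  unfolding cont_def by (rule Gcd_greatest) auto

lemma cont_zero_iff: "cont v = 0 \<longleftrightarrow> v = 0"
  unfolding cont_def by (auto simp: vec_eq_iff)

lemma cont_dvd_image:
  assumes "f \<in> Aut" shows "cont v dvd cont (f v)"
proof (cases "cont v = 0")
  case True
  then have "v = 0" by (simp add: cont_zero_iff)
  then have "f v = 0" using additive_zero assms by (auto simp: Aut_def)
  then show ?thesis by (simp add: \<open>v = 0\<close>)
next
  case False
  define k where "k = cont v"
  define u where "u = (\<chi> i. v $ i div k)"
  have "v = k *s u" using cont_dvd[of v] by (simp add: u_def k_def vec_eq_iff)
  then have "f v = k *s f u" using additive_smult assms by (auto simp: Aut_def)
  then show ?thesis by (auto intro!: dvd_cont simp: k_def)
qed

lemma cont_Aut: assumes "f \<in> Aut" shows "cont (f v) = cont v"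
proof -
  have "inv f (f v) = v" using assms by (simp add: Aut_def bij_is_inj)
  then have "cont (f v) dvd cont v" using cont_dvd_image[OF Aut_inv[OF assms], of "f v"] by simp
  then show ?thesis using cont_dvd_image[OF assms, of v] cont_nonneg zdvd_antisym_nonneg by blast
qed


definition rep :: "'n \<Rightarrow> nat \<Rightarrow> int ^ 'n" where
  "rep a d = (\<chi> j. if j = a then int d else 0)"

definition N :: "int ^ 'n \<Rightarrow> int" where
  "N v = (\<Sum>k\<in>UNIV. \<bar>v $ k\<bar>)"

lemma cont_rep: "cont (rep a d) = int d"
proof -
  have "cont (rep a d) dvd int d" using cont_dvd[of "rep a d" a] by (simp add: rep_def)
  moreover have "int d dvd cont (rep a d)" by (rule dvd_cont) (simp add: rep_def)
  ultimately show ?thesis by (intro zdvd_antisym_nonneg cont_nonneg) auto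
qed

lemma sum_list_rep: "sum_list (replicate d (axis a 1)) = rep a d"
  by (induction d) (auto simp: rep_def vec_eq_iff axis_def)

lemma wl_rep: "word_length std_gens (rep a d) \<le> d"
proof -
  have "axis a 1 \<in> std_gens" by (auto simp: std_gens_def)
  then have "\<exists>xs. length xs = d \<and> set xs \<subseteq> std_gens \<union> uminus ` std_gens \<and> sum_list xs = rep a d"
    using sum_list_rep by (intro exI[of _ "replicate d (axis a 1)"]) auto
  then show ?thesis unfolding word_length_def by (rule Least_le)
qed

lemma N_add: "N (x + y) \<le> N x + N y"
  unfolding N_def sum.distrib[symmetric] by (rule sum_mono) (simp add: abs_triangle_ineq)

lemma N_axis: "N (axis i (1::int)) = 1" "N (- axis i (1::int)) = 1"
  by (simp_all add: N_def axis_def if_distrib cong: if_cong)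

lemma N_sum_list: "set xs \<subseteq> std_gens \<union> uminus ` std_gens \<Longrightarrow> N (sum_list xs) \<le> int (length xs)"
proof (induction xs)
  case Nil
  then show ?case by (simp add: N_def)
next
  case (Cons x xs)
  have "N x = 1" using Cons.prems N_axis by (auto simp: std_gens_def)
  then show ?case using Cons N_add[of x "sum_list xs"] by simp
qed

lemma N_nonneg: "N v \<ge> 0" unfolding N_def by (simp add: sum_nonneg)

lemma N_zero_iff: "N v = 0 \<longleftrightarrow> v = 0"
  unfolding N_def by (simp add: sum_nonneg_eq_0_iff vec_eq_iff)

lemma repr_exists: "\<exists>xs. set xs \<subseteq> std_gens \<union> uminus ` std_gens \<and> sum_list xs = (v :: int ^ 'n)"
proof (induction "nat (N v)" arbitrary: v rule: less_induct)
  case less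
  show ?case
  proof (cases "v = 0")
    case True
    then show ?thesis by (intro exI[of _ "[]"]) auto
  next
    case False
    then obtain i where i: "v $ i \<noteq> 0" by (auto simp: vec_eq_iff)
    define e where "e = (if v $ i > 0 then axis i (1::int) else - axis i 1)"
    have e: "e \<in> std_gens \<union> uminus ` std_gens" by (auto simp: e_def std_gens_def)
    define w where "w = v - e"
    have "N w < N v" unfolding N_def
    proof (rule sum_strict_mono_ex1)
      show "\<forall>x\<in>UNIV. \<bar>w $ x\<bar> \<le> \<bar>v $ x\<bar>" using i by (auto simp: w_def e_def axis_def)
      show "\<exists>a\<in>UNIV. \<bar>w $ a\<bar> < \<bar>v $ a\<bar>" using i by (intro bexI[of _ i]) (auto simp: w_def e_def axis_def)
    qed simp
    then have "nat (N w) < nat (N v)" using N_nonneg[of w] by linarith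
    then obtain xs where xs: "set xs \<subseteq> std_gens \<union> uminus ` std_gens" "sum_list xs = w" using less by blast
    show ?thesis using xs e by (intro exI[of _ "e # xs"]) (auto simp: w_def)
  qed
qed

lemma N_le_wl: "N v \<le> int (word_length std_gens v)"
proof -
  obtain xs where "set xs \<subseteq> std_gens \<union> uminus ` std_gens" "sum_list xs = v" using repr_exists by blast
  then have "\<exists>n xs. length xs = n \<and> set xs \<subseteq> std_gens \<union> uminus ` std_gens \<and> sum_list xs = v" by blast
  then have "\<exists>xs. length xs = word_length std_gens v \<and> set xs \<subseteq> std_gens \<union> uminus ` std_gens \<and> sum_list xs = v"
    unfolding word_length_def by (rule LeastI_ex)
  then show ?thesis using N_sum_list by force
qed

lemma cont_le_N: "cont v \<le> N v"
proof (cases "v = 0")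
  case True
  then show ?thesis using cont_zero_iff[of v] N_zero_iff[of v] by simp
next
  case False
  then obtain i where i: "v $ i \<noteq> 0" by (auto simp: vec_eq_iff)
  have "\<bar>cont v\<bar> \<le> \<bar>v $ i\<bar>" using dvd_imp_le_int[OF i cont_dvd] .
  also have "\<dots> \<le> N v" unfolding N_def by (rule member_le_sum) auto
  finally show ?thesis by simp
qed


definition T :: "int \<Rightarrow> 'n \<Rightarrow> 'n \<Rightarrow> int ^ 'n \<Rightarrow> int ^ 'n" where
  "T s i j x = (\<chi> k. if k = j then x $ j + s * x $ i else x $ k)"

lemma T_Aut: assumes "i \<noteq> j" shows "T s i j \<in> Aut"
proof -
  have "T s i j \<circ> T (-s) i j = id" "T (-s) i j \<circ> T s i j = id"
    using assms by (auto simp: T_def vec_eq_iff fun_eq_iff)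
  then have "bij (T s i j)" using o_bij by blast
  moreover have "T s i j (x + y) = T s i j x + T s i j y" for x y
    by (simp add: T_def vec_eq_iff algebra_simps)
  ultimately show ?thesis by (simp add: Aut_def)
qed

definition P :: "int \<Rightarrow> 'n \<Rightarrow> 'n \<Rightarrow> int ^ 'n \<Rightarrow> int ^ 'n" where
  "P s i a x = (\<chi> k. s * x $ (if k = a then i else if k = i then a else k))"

lemma P_Aut: assumes "s = 1 \<or> s = -1" shows "P s i a \<in> Aut"
proof -
  have "P s i a \<circ> P s i a = id"
    using assms by (auto simp: P_def vec_eq_iff fun_eq_iff)
  then have "bij (P s i a)" using o_bij by blast
  moreover have "P s i a (x + y) = P s i a x + P s i a y" for x y
    by (simp add: P_def vec_eq_iff algebra_simps)
  ultimately show ?thesis by (simp add: Aut_def)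
qed

lemma reduce: "\<exists>f\<in>Aut. f v = rep a (nat (cont (v :: int ^ 'n)))"
proof (induction "nat (N v)" arbitrary: v rule: less_induct)
  case less
  show ?case
  proof (cases "\<exists>i j. i \<noteq> j \<and> v $ i \<noteq> 0 \<and> v $ j \<noteq> 0")
    case True
    then obtain i j where ij: "i \<noteq> j" "v $ i \<noteq> 0" "\<bar>v $ i\<bar> \<le> \<bar>v $ j\<bar>"
      by (metis linorder_le_cases)
    obtain s :: int where s: "\<bar>v $ j + s * v $ i\<bar> < \<bar>v $ j\<bar>"
    proof (cases "(v $ i > 0) = (v $ j > 0)")
      case True
      then show ?thesis using ij by (intro that[of "-1"]) auto
    next
      case False
      then show ?thesis using ij by (intro that[of "1"]) auto
    qed
    define w where "w = T s i j v"
    have "N w < N v" unfolding N_def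
    proof (rule sum_strict_mono_ex1)
      show "\<forall>x\<in>UNIV. \<bar>w $ x\<bar> \<le> \<bar>v $ x\<bar>" using s by (auto simp: w_def T_def)
      show "\<exists>a\<in>UNIV. \<bar>w $ a\<bar> < \<bar>v $ a\<bar>" using s by (intro bexI[of _ j]) (auto simp: w_def T_def)
    qed simp
    then have "nat (N w) < nat (N v)" using N_nonneg[of w] by linarith
    then obtain f where f: "f \<in> Aut" "f w = rep a (nat (cont w))" using less by blast
    have "cont w = cont v" unfolding w_def using cont_Aut[OF T_Aut[OF ij(1)]] .
    then show ?thesis using f Aut_comp[OF f(1) T_Aut[OF ij(1)]]
      by (intro bexI[of _ "f \<circ> T s i j"]) (auto simp: w_def)
  next
    case False
    show ?thesis
    proof (cases "v = 0")
      case True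
      then show ?thesis using Aut_id cont_zero_iff[of v]
        by (intro bexI[of _ id]) (auto simp: rep_def vec_eq_iff)
    next
      case v0: False
      then obtain i where i: "v $ i \<noteq> 0" by (auto simp: vec_eq_iff)
      then have oth: "\<And>k. k \<noteq> i \<Longrightarrow> v $ k = 0" using False by blast
      define s where "s = sgn (v $ i)"
      have s1: "s = 1 \<or> s = -1" using i by (auto simp: s_def sgn_if)
      have sv: "s * v $ i = \<bar>v $ i\<bar>" by (auto simp: s_def sgn_if)
      have Pv: "P s i a v = rep a (nat \<bar>v $ i\<bar>)"
        using oth i sv by (auto simp: P_def rep_def vec_eq_iff)
      have "cont v = \<bar>v $ i\<bar>" using cont_Aut[OF P_Aut[OF s1], of i a v] Pv cont_rep[of a "nat \<bar>v $ i\<bar>"] by simp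
      then show ?thesis using Pv P_Aut[OF s1] by (intro bexI[of _ "P s i a"]) auto
    qed
  qed
qed

theorem mainTheorem9:
  fixes n :: nat
  shows "card {aut_orbit (v :: int ^ 'r) | v. word_length std_gens v \<le> n} = n + 1"
proof -
  define a :: 'r where "a = undefined"
  have eq: "{aut_orbit (v :: int ^ 'r) | v. word_length std_gens v \<le> n} = (\<lambda>d. aut_orbit (rep a d)) ` {0..n}"
  proof (intro set_eqI iffI)
    fix X assume "X \<in> {aut_orbit (v :: int ^ 'r) | v. word_length std_gens v \<le> n}"
    then obtain v :: "int ^ 'r" where v: "X = aut_orbit v" "word_length std_gens v \<le> n" by blast
    obtain f where f: "f \<in> Aut" "f v = rep a (nat (cont v))" using reduce by blast
    have "cont v \<le> int n" using cont_le_N[of v] N_le_wl[of v] v(2) by linarith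
    then have "nat (cont v) \<in> {0..n}" by auto
    moreover have "X = aut_orbit (rep a (nat (cont v)))" using aut_orbit_eq[OF f(1), of v] f(2) v(1) by simp
    ultimately show "X \<in> (\<lambda>d. aut_orbit (rep a d)) ` {0..n}" by blast
  next
    fix X assume "X \<in> (\<lambda>d. aut_orbit (rep a d)) ` {0..n}"
    then obtain d where "d \<le> n" "X = aut_orbit (rep a d)" by auto
    then show "X \<in> {aut_orbit (v :: int ^ 'r) | v. word_length std_gens v \<le> n}"
      using wl_rep[of a d] by (intro CollectI exI[of _ "rep a d"]) auto
  qed
  have "inj_on (\<lambda>d. aut_orbit (rep a d)) {0..n}"
  proof (rule inj_onI)
    fix d e assume "d \<in> {0..n}" "e \<in> {0..n}" "aut_orbit (rep a d) = aut_orbit (rep a e)"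
    moreover have "rep a e \<in> aut_orbit (rep a e)" using Aut_id unfolding aut_orbit_def
      by (intro CollectI exI[of _ id]) simp
    ultimately have "rep a e \<in> aut_orbit (rep a d)" by simp
    then obtain f where "f \<in> Aut" "rep a e = f (rep a d)" by (auto simp: aut_orbit_def)
    then have "cont (rep a e) = cont (rep a d)" using cont_Aut by simp
    then show "d = e" by (simp add: cont_rep)
  qed
  then show ?thesis unfolding eq by (simp add: card_image)
qed

end
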